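(* Let $(u_1,\dots,u_k)$ be a tuple of linearly independent pairwise orthogonal vectors of $\mathbb{C}^n$. Then for every $\epsilon>0$ there is a tuple $(v_1(\epsilon),\dots,v_k(\epsilon))$ of pairwise orthogonal vectors of $\mathbb{C}^n$ with $\langle v_j(\epsilon),v_j(\epsilon)\rangle\neq 0$ for all $j$, such that $\lim_{\epsilon\to 0}v_j(\epsilon)=u_j$ for all $j=1,\dots,k$.
   Context: $\langle x,y\rangle=\sum_i x_iy_i$ is the bilinear (non-Hermitian) form on $\mathbb{C}^n$, and orthogonality of vectors refers to this form. *)

theory Defs
  imports "HOL-Analysis.Analysis"
begin

text \<open>The bilinear (non-Hermitian) form on complex n-space.\<close>
definition cbil :: "complex^'n \<Rightarrow> complex^'n \<Rightarrow> complex" where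
  "cbil x y = (\<Sum>i\<in>UNIV. x $ i * y $ i)"

definition clin_indep_tuple :: "nat \<Rightarrow> (nat \<Rightarrow> complex^'n) \<Rightarrow> bool" where
  "clin_indep_tuple k u \<longleftrightarrow>
     (\<forall>c :: nat \<Rightarrow> complex. (\<Sum>j<k. c j *s u j) = 0 \<longrightarrow> (\<forall>j<k. c j = 0))"

end

theory Submission
  imports Defs
begin

lemma cbil_sym: "cbil x y = cbil y x"
  unfolding cbil_def by (simp add: mult.commute)

lemma cbil_add_left: "cbil (x + y) z = cbil x z + cbil y z"
  unfolding cbil_def by (simp add: distrib_right sum.distrib)

lemma cbil_add_right: "cbil z (x + y) = cbil z x + cbil z y"
  unfolding cbil_def by (simp add: distrib_left sum.distrib)

lemma cbil_diff_left: "cbil (x - y) z = cbil x z - cbil y z"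
  unfolding cbil_def by (simp add: left_diff_distrib sum_subtractf)

lemma cbil_diff_right: "cbil z (x - y) = cbil z x - cbil z y"
  unfolding cbil_def by (simp add: right_diff_distrib sum_subtractf)

lemma cbil_scale_left: "cbil (c *s x) z = c * cbil x z"
  unfolding cbil_def by (simp add: sum_distrib_left mult.assoc)

lemma cbil_scale_right: "cbil z (c *s x) = c * cbil z x"
  unfolding cbil_def by (simp add: sum_distrib_left algebra_simps)

lemma cbil_scaleR_left: "cbil ((r::real) *\<^sub>R x) z = of_real r * cbil x z"
  unfolding cbil_def vector_scaleR_component by (simp add: sum_distrib_left mult.assoc scaleR_conv_of_real)

lemma cbil_scaleR_right: "cbil z ((r::real) *\<^sub>R x) = of_real r * cbil z x"
  unfolding cbil_def vector_scaleR_component by (simp add: sum_distrib_left algebra_simps scaleR_conv_of_real)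

lemma cbil_zero_left[simp]: "cbil 0 z = 0" and cbil_zero_right[simp]: "cbil z 0 = 0"
  unfolding cbil_def by simp_all

lemma cbil_sum_left: "cbil (\<Sum>m\<in>A. f m) z = (\<Sum>m\<in>A. cbil (f m) z)"
  by (induction A rule: infinite_finite_induct) (simp_all add: cbil_add_left)

lemma cbil_sum_right: "cbil z (\<Sum>m\<in>A. f m) = (\<Sum>m\<in>A. cbil z (f m))"
  by (induction A rule: infinite_finite_induct) (simp_all add: cbil_add_right)

lemma dual_exists:
  fixes u :: "nat \<Rightarrow> complex^'n"
  assumes ind: "clin_indep_tuple k u" and j: "j < k"
  shows "\<exists>x. \<forall>i<k. cbil x (u i) = (if i = j then 1 else 0)"
proof -
  have inj: "inj_on u {..<k}"
  proof (rule inj_onI, rule ccontr)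
    fix a b assume a: "a \<in> {..<k}" and b: "b \<in> {..<k}" and e: "u a = u b" and ne: "a \<noteq> b"
    define c where "c = (\<lambda>m. if m = a then (1::complex) else if m = b then -1 else 0)"
    have "(\<Sum>m<k. c m *s u m) = (\<Sum>m\<in>{a,b}. c m *s u m)"
      by (rule sum.mono_neutral_right) (use a b in \<open>auto simp: c_def\<close>)
    also have "\<dots> = 0" using ne e by (simp add: c_def)
    finally have "c a = 0" using ind a unfolding clin_indep_tuple_def by auto
    then show False by (simp add: c_def)
  qed
  define B where "B = u ` {..<k}"
  have indB: "vec.independent B"
  proof (rule vec.independent_if_scalars_zero)
    show "finite B" by (simp add: B_def)
    fix f x assume s: "(\<Sum>x\<in>B. f x *s x) = 0" and x: "x \<in> B"
    have "(\<Sum>m<k. f (u m) *s u m) = (\<Sum>x\<in>B. f x *s x)"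
      unfolding B_def by (subst sum.reindex[OF inj]) simp
    then have "\<forall>m<k. f (u m) = 0" using ind s unfolding clin_indep_tuple_def by auto
    then show "f x = 0" using x by (auto simp: B_def)
  qed
  define E where "E = vec.extend_basis B"
  have indE: "vec.independent E" unfolding E_def by (rule vec.independent_extend_basis[OF indB])
  have spE: "vec.span E = UNIV" unfolding E_def by (rule vec.span_extend_basis[OF indB])
  have BE: "B \<subseteq> E" unfolding E_def by (rule vec.extend_basis_superset[OF indB])
  define \<phi> where "\<phi> y = vec.representation E y (u j)" for y
  have add: "\<phi> (y + z) = \<phi> y + \<phi> z" for y z
    unfolding \<phi>_def using vec.representation_add[OF indE] spE by simp
  have scl: "\<phi> (c *s y) = c * \<phi> y" for c y
    unfolding \<phi>_def using vec.representation_scale[OF indE] spE by simp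
  have zero: "\<phi> 0 = 0" using scl[of 0 0] by simp
  have sum: "\<phi> (\<Sum>i\<in>A. g i) = (\<Sum>i\<in>A. \<phi> (g i))" for A :: "'n set" and g
    by (induction A rule: infinite_finite_induct) (simp_all add: zero add)
  define x where "x = (\<chi> i. \<phi> (axis i 1))"
  have exp: "\<phi> y = cbil x y" for y
  proof -
    have "\<phi> y = \<phi> (\<Sum>i\<in>UNIV. y $ i *s axis i 1)" by (simp add: basis_expansion)
    also have "\<dots> = (\<Sum>i\<in>UNIV. y $ i * \<phi> (axis i 1))" by (simp add: sum scl)
    finally show ?thesis unfolding cbil_def x_def by (simp add: mult.commute)
  qed
  have "\<forall>i<k. cbil x (u i) = (if i = j then 1 else 0)"
  proof (intro allI impI)
    fix i assume i: "i < k"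
    have "u i \<in> E" using BE i by (auto simp: B_def)
    then have "\<phi> (u i) = (if u j = u i then 1 else 0)"
      unfolding \<phi>_def using vec.representation_basis[OF indE] by simp
    moreover have "(u j = u i) = (j = i)" using inj i j by (auto dest: inj_onD)
    ultimately show "cbil x (u i) = (if i = j then 1 else 0)" using exp by auto
  qed
  then show ?thesis by blast
qed

theorem lemma22:
  fixes k :: nat and u :: "nat \<Rightarrow> complex^'n"
  assumes "clin_indep_tuple k u"
    and "\<forall>i<k. \<forall>j<k. i \<noteq> j \<longrightarrow> cbil (u i) (u j) = 0"
  shows "\<exists>v :: real \<Rightarrow> nat \<Rightarrow> complex^'n.
           (\<forall>\<epsilon>>0. (\<forall>i<k. \<forall>j<k. i \<noteq> j \<longrightarrow> cbil (v \<epsilon> i) (v \<epsilon> j) = 0)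
                 \<and> (\<forall>j<k. cbil (v \<epsilon> j) (v \<epsilon> j) \<noteq> 0))
         \<and> (\<forall>j<k. ((\<lambda>\<epsilon>. v \<epsilon> j) \<longlongrightarrow> u j) (at_right 0))"
proof -
  note orth = assms(2)
  have "\<forall>j. \<exists>x. j < k \<longrightarrow> (\<forall>i<k. cbil x (u i) = (if i = j then 1 else 0))"
    using dual_exists[OF assms(1)] by blast
  then obtain y where y: "\<And>i j. j < k \<Longrightarrow> i < k \<Longrightarrow> cbil (y j) (u i) = (if i = j then 1 else 0)"
    by metis
  define I where "I = {j. j < k \<and> cbil (u j) (u j) = 0}"
  have finI: "finite I" unfolding I_def by simp
  define S where "S j = (\<Sum>m\<in>I. cbil (y j) (y m) *s u m)" for j
  define z where "z j = (if j \<in> I then y j - (1/2) *s S j else 0)" for j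
  define v where "v \<epsilon> j = u j + \<epsilon> *\<^sub>R z j" for \<epsilon> :: real and j
  have uu: "cbil (u i) (u m) = 0" if "i < k" "m \<in> I" for i m
    using orth that by (cases "i = m") (auto simp: I_def)
  have uS: "cbil (u i) (S j) = 0" if "i < k" for i j
    unfolding S_def cbil_sum_right cbil_scale_right using uu[OF that] by simp
  have A: "cbil (u i) (z j) = (if i = j \<and> j \<in> I then 1 else 0)" if i: "i < k" for i j
  proof (cases "j \<in> I")
    case True
    then have "j < k" by (simp add: I_def)
    then have "cbil (u i) (y j) = (if i = j then 1 else 0)" using y i by (simp add: cbil_sym)
    then show ?thesis using True uS[OF i, of j] by (simp add: z_def cbil_diff_right cbil_scale_right)
  qed (simp add: z_def)
  have yS: "cbil (y i) (S j) = cbil (y j) (y i)" if "i \<in> I" for i j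
  proof -
    have ik: "i < k" using that by (simp add: I_def)
    have "cbil (y i) (S j) = (\<Sum>m\<in>I. cbil (y j) (y m) * (if m = i then 1 else 0))"
      unfolding S_def cbil_sum_right cbil_scale_right
      by (rule sum.cong) (auto simp: y ik I_def)
    also have "\<dots> = cbil (y j) (y i)" using finI that
      by (simp add: if_distrib[where f="\<lambda>x. _ * x"] sum.delta cong: if_cong)
    finally show ?thesis .
  qed
  have SS: "cbil (S i) (S j) = 0" for i j
    unfolding S_def[of i] cbil_sum_left cbil_scale_left
    by (rule sum.neutral) (simp add: uS I_def)
  have B: "cbil (z i) (z j) = 0" for i j
  proof (cases "i \<in> I \<and> j \<in> I")
    case True
    have "cbil (z i) (z j) = cbil (y i) (y j) - (1/2) * cbil (y i) (S j)
        - (1/2) * cbil (S i) (y j) + (1/4) * cbil (S i) (S j)"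
      using True by (simp add: z_def cbil_diff_right cbil_diff_left cbil_scale_left cbil_scale_right
          algebra_simps)
    also have "\<dots> = 0" using True yS[of i j] yS[of j i] SS[of i j]
      by (simp add: cbil_sym[of "S i"] cbil_sym[of "y j" "y i"])
    finally show ?thesis .
  qed (auto simp: z_def)
  have vv: "cbil (v \<epsilon> i) (v \<epsilon> j) = cbil (u i) (u j) + of_real \<epsilon> * cbil (u i) (z j)
      + of_real \<epsilon> * cbil (u j) (z i) + of_real \<epsilon> * of_real \<epsilon> * cbil (z i) (z j)" for \<epsilon> i j
    by (simp add: v_def cbil_add_left cbil_add_right cbil_scaleR_left cbil_scaleR_right
        cbil_sym[of "z i" "u j"] algebra_simps)
  have P1: "\<forall>\<epsilon>>0. (\<forall>i<k. \<forall>j<k. i \<noteq> j \<longrightarrow> cbil (v \<epsilon> i) (v \<epsilon> j) = 0)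
                 \<and> (\<forall>j<k. cbil (v \<epsilon> j) (v \<epsilon> j) \<noteq> 0)"
  proof (intro allI impI conjI)
    fix \<epsilon> :: real and i j assume "\<epsilon> > 0" "i < k" "j < k" "i \<noteq> j"
    then show "cbil (v \<epsilon> i) (v \<epsilon> j) = 0" using vv A B orth by simp
  next
    fix \<epsilon> :: real and j assume e: "\<epsilon> > 0" and j: "j < k"
    show "cbil (v \<epsilon> j) (v \<epsilon> j) \<noteq> 0"
    proof (cases "j \<in> I")
      case True
      then have "cbil (v \<epsilon> j) (v \<epsilon> j) = 2 * of_real \<epsilon>" using vv A[OF j] B by (simp add: I_def)
      then show ?thesis using e by simp
    next
      case False
      then show ?thesis using vv A[OF j] B j by (simp add: I_def)
    qed
  qed
  have P2: "\<forall>j<k. ((\<lambda>\<epsilon>. v \<epsilon> j) \<longlongrightarrow> u j) (at_right 0)"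
  proof (intro allI impI)
    fix j
    have "((\<lambda>\<epsilon>::real. u j + \<epsilon> *\<^sub>R z j) \<longlongrightarrow> u j + 0 *\<^sub>R z j) (at_right 0)"
      by (intro tendsto_intros)
    then show "((\<lambda>\<epsilon>. v \<epsilon> j) \<longlongrightarrow> u j) (at_right 0)" by (simp add: v_def)
  qed
  show ?thesis using P1 P2 by blast
qed

end
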